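(* For every $\epsilon\in\mathbb{R}$, the set $\mathrm{Spec}(\mathcal{L}_\epsilon)$ is a discrete subset of $\mathbb{C}$.
   Context: Fix $a>0$, $b\in\mathbb{R}\setminus\{0\}$, $\nu\in[0,1)$, an integer $k\ge 2$ and $c\in C^k(\mathbb{S}^1,\mathbb{C})$ (functions on $\mathbb{S}^1$ are $2\pi$-periodic functions of $t\in\mathbb{R}$). For $\epsilon\in\mathbb{R}$ put $\lambda_\epsilon=a+ib\epsilon$, $L_\epsilon=\lambda_\epsilon\partial_t-ir\partial_r$ on $(0,\infty)\times\mathbb{S}^1$ (coordinates $(r,t)$), and $\mathcal{L}_\epsilon u=L_\epsilon u+i\lambda_\epsilon\nu u-c(t)\bar u$. A basic solution of $\mathcal{L}_\epsilon$ is a nontrivial solution $w$ of $\mathcal{L}_\epsilon w=0$ on $(0,\infty)\times\mathbb{S}^1$ of the form $w=r^\sigma\phi(t)+\overline{r^\sigma\psi(t)}$ with $\sigma\in\mathbb{C}$ and $\phi,\psi$ $2\pi$-periodic. (If $\sigma\notin\mathbb{R}$ one of $|\phi|,|\psi|$ is everywhere strictly larger than the other; replacing $(\sigma,\phi,\psi)$ by $(\bar\sigma,\bar\psi,\bar\phi)$ if necessary one writes $w$ with $|\phi|>|\psi|$; if $\sigma\in\mathbb{R}$, $w=r^\sigma f$ with $f=\phi+\bar\psi$.) The number $\sigma$ in this normalized representation is the exponent of $w$, and $\mathrm{Spec}(\mathcal{L}_\epsilon)\subset\mathbb{C}$ is the set of exponents of basic solutions of $\mathcal{L}_\epsilon$.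 *)

theory Defs
  imports "HOL-Analysis.Analysis"
begin

text \<open>A function on the circle S^1 is a 2pi-periodic function of t.\<close>
definition periodic2pi :: "(real \<Rightarrow> 'a) \<Rightarrow> bool" where
  "periodic2pi f \<longleftrightarrow> (\<forall>t. f (t + 2 * pi) = f t)"

definition vderiv_iter :: "nat \<Rightarrow> (real \<Rightarrow> complex) \<Rightarrow> real \<Rightarrow> complex" where
  "vderiv_iter j f = ((\<lambda>g x. vector_derivative g (at x)) ^^ j) f"

definition Ck :: "nat \<Rightarrow> (real \<Rightarrow> complex) \<Rightarrow> bool" where
  "Ck k f \<longleftrightarrow> (\<forall>j<k. \<forall>x. vderiv_iter j f differentiable at x)
              \<and> continuous_on UNIV (vderiv_iter k f)"

definition lam :: "real \<Rightarrow> real \<Rightarrow> real \<Rightarrow> complex" where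
  "lam a b \<epsilon> = Complex a (b * \<epsilon>)"

definition solves :: "real \<Rightarrow> real \<Rightarrow> real \<Rightarrow> (real \<Rightarrow> complex) \<Rightarrow> real
                       \<Rightarrow> (real \<Rightarrow> real \<Rightarrow> complex) \<Rightarrow> bool" where
  "solves a b \<nu> c \<epsilon> w \<longleftrightarrow>
     (\<forall>r>0. \<forall>t. \<exists>wt wr.
        ((\<lambda>s. w r s) has_vector_derivative wt) (at t) \<and>
        ((\<lambda>\<rho>. w \<rho> t) has_vector_derivative wr) (at r) \<and>
        lam a b \<epsilon> * wt - \<i> * complex_of_real r * wr + \<i> * lam a b \<epsilon> * complex_of_real \<nu> * w r t
          - c t * cnj (w r t) = 0)"

definition basic_form :: "complex \<Rightarrow> (real \<Rightarrow> complex) \<Rightarrow> (real \<Rightarrow> complex)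
                          \<Rightarrow> real \<Rightarrow> real \<Rightarrow> complex" where
  "basic_form \<sigma> \<phi> \<psi> r t =
     complex_of_real r powr \<sigma> * \<phi> t + cnj (complex_of_real r powr \<sigma> * \<psi> t)"

text \<open>Spec: exponents sigma of basic solutions written in normalized form
  (sigma real, or |phi| > |psi| everywhere).\<close>
definition Spec :: "real \<Rightarrow> real \<Rightarrow> real \<Rightarrow> (real \<Rightarrow> complex) \<Rightarrow> real \<Rightarrow> complex set" where
  "Spec a b \<nu> c \<epsilon> = {\<sigma>. \<exists>\<phi> \<psi>.
      periodic2pi \<phi> \<and> periodic2pi \<psi> \<and>
      solves a b \<nu> c \<epsilon> (basic_form \<sigma> \<phi> \<psi>) \<and>
      (\<exists>r>0. \<exists>t. basic_form \<sigma> \<phi> \<psi> r t \<noteq> 0) \<and>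
      (\<sigma> \<in> \<real> \<or> (\<forall>t. norm (\<phi> t) > norm (\<psi> t)))}"

end

theory Submission
  imports Defs "HOL-Complex_Analysis.Complex_Analysis"
begin


locale odesys =
  fixes lm :: complex and nu :: real and c :: "real \<Rightarrow> complex"
  assumes lm_nz: "lm \<noteq> 0" and c_cont: "continuous_on UNIV c"
begin

definition P :: "complex \<Rightarrow> complex" where "P z = \<i>*z/lm - \<i>* of_real nu"
definition Q :: "complex \<Rightarrow> complex" where "Q z = - \<i>*z/cnj lm + \<i>* of_real nu"
definition C1 :: "real \<Rightarrow> complex" where "C1 t = c t / lm"
definition C2 :: "real \<Rightarrow> complex" where "C2 t = cnj (c t) / cnj lm"
definition d1 :: complex where "d1 = \<i>/lm"
definition d2 :: complex where "d2 = - \<i>/cnj lm"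

lemma P_split: "P z = P 0 + z * d1" by (simp add: P_def d1_def)
lemma Q_split: "Q z = Q 0 + z * d2" by (simp add: Q_def d2_def)

lemma C1_cont: "continuous_on S C1"
  unfolding C1_def by (intro continuous_intros continuous_on_subset[OF c_cont]) (auto simp: lm_nz)
lemma C2_cont: "continuous_on S C2"
  unfolding C2_def by (intro continuous_intros continuous_on_subset[OF c_cont]) (auto simp: lm_nz)

definition Aop :: "complex \<Rightarrow> bool \<Rightarrow> complex \<Rightarrow> complex \<Rightarrow> real \<Rightarrow> complex" where
 "Aop z b y1 y2 t = (if b then P z * y1 + C1 t * y2 else Q z * y2 + C2 t * y1)"

primrec W :: "complex \<Rightarrow> complex \<Rightarrow> nat \<Rightarrow> nat \<Rightarrow> bool \<Rightarrow> real \<Rightarrow> complex" where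
  "W e1 e2 0 j b t = (if j = 0 then (if b then e1 else e2) else 0)"
| "W e1 e2 (Suc n) j b t = integral {0..t} (\<lambda>s. Aop 0 b (W e1 e2 n j True s) (W e1 e2 n j False s) s
      + (if j = 0 then 0 else (if b then d1 * W e1 e2 n (j-1) True s else d2 * W e1 e2 n (j-1) False s)))"

definition G :: "complex \<Rightarrow> complex \<Rightarrow> nat \<Rightarrow> nat \<Rightarrow> bool \<Rightarrow> real \<Rightarrow> complex" where
  "G e1 e2 n j b s = Aop 0 b (W e1 e2 n j True s) (W e1 e2 n j False s) s
      + (if j = 0 then 0 else (if b then d1 * W e1 e2 n (j-1) True s else d2 * W e1 e2 n (j-1) False s))"

lemma W_Suc_fun: "W e1 e2 (Suc n) j b = (\<lambda>t. integral {0..t} (G e1 e2 n j b))"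
  by (simp add: G_def[abs_def] fun_eq_iff)

lemma G_cont: assumes "\<And>j b. continuous_on S (W e1 e2 n j b)" shows "continuous_on S (G e1 e2 n j b)"
  unfolding G_def Aop_def by (cases b; cases "j = 0") (auto intro!: continuous_intros C1_cont C2_cont assms)

lemma W_cont: "continuous_on {0..T} (W e1 e2 n j b)"
proof (induction n arbitrary: j b)
  case 0
  then show ?case by (simp add: continuous_on_const)
next
  case (Suc n)
  have Gc: "continuous_on {0..T} (G e1 e2 n j b)" for j b
    using Suc.IH by (rule G_cont)
  show ?case unfolding W_Suc_fun
    by (rule continuous_on_vector_derivative, rule integral_has_vector_derivative[OF Gc]) auto
qed

lemma W_deriv: "t \<in> {0..T} \<Longrightarrow> (W e1 e2 (Suc n) j b has_vector_derivative G e1 e2 n j b t) (at t within {0..T})"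
proof -
  assume t: "t \<in> {0..T}"
  have Gc: "continuous_on {0..T} (G e1 e2 n j b)"
    using W_cont by (rule G_cont)
  show ?thesis unfolding W_Suc_fun by (rule integral_has_vector_derivative[OF Gc t])
qed

lemma W_zero: "n < j \<Longrightarrow> W e1 e2 n j b t = 0"
proof (induction n arbitrary: j b t)
  case 0 then show ?case by simp
next
  case (Suc n)
  have "G e1 e2 n j b = (\<lambda>s. 0)" using Suc by (auto simp: G_def Aop_def fun_eq_iff)
  then show ?case by (simp add: W_Suc_fun)
qed

lemma W_at0: "W e1 e2 (Suc n) j b 0 = 0"
  by simp

end

context odesys begin

definition V :: "complex \<Rightarrow> complex \<Rightarrow> nat \<Rightarrow> complex \<Rightarrow> bool \<Rightarrow> real \<Rightarrow> complex" where
  "V e1 e2 n z b t = (\<Sum>j\<le>n. z^j * W e1 e2 n j b t)"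

lemma V_0: "V e1 e2 0 z b t = (if b then e1 else e2)"
  by (simp add: V_def)

lemma V_Suc_at0: "V e1 e2 (Suc n) z b 0 = 0"
  by (simp add: V_def)

lemma V_sum_id:
  "(\<Sum>j\<le>Suc n. z^j * G e1 e2 n j b t) = Aop z b (V e1 e2 n z True t) (V e1 e2 n z False t) t"
proof -
  have e1: "(\<Sum>j\<le>Suc n. z^j * W e1 e2 n j b' t) = V e1 e2 n z b' t" for b'
    by (simp add: V_def W_zero)
  have e2: "(\<Sum>j\<le>Suc n. z^j * (if j = 0 then 0 else dd * W e1 e2 n (j-1) b' t)) = z * dd * V e1 e2 n z b' t"
    for dd b'
    by (subst sum.atMost_Suc_shift) (simp add: V_def sum_distrib_left mult.assoc mult.left_commute)
  have e3: "(\<Sum>j\<le>Suc n. z^j * (K1 * W e1 e2 n j True t + K2 * W e1 e2 n j False t))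
      = K1 * V e1 e2 n z True t + K2 * V e1 e2 n z False t" for K1 K2
    by (simp add: e1[symmetric] distrib_left sum.distrib sum_distrib_left mult.left_commute)
  show ?thesis
  proof (cases b)
    case True
    have "(\<Sum>j\<le>Suc n. z^j * G e1 e2 n j b t) =
      (\<Sum>j\<le>Suc n. z^j * (P 0 * W e1 e2 n j True t + C1 t * W e1 e2 n j False t))
      + (\<Sum>j\<le>Suc n. z^j * (if j = 0 then 0 else d1 * W e1 e2 n (j-1) True t))"
      using True by (simp add: G_def Aop_def distrib_left sum.distrib cong: if_cong)
    also have "\<dots> = Aop z b (V e1 e2 n z True t) (V e1 e2 n z False t) t"
      by (simp only: e2 e3) (simp add: True Aop_def P_split[of z] algebra_simps)
    finally show ?thesis .
  next
    case False
    have "(\<Sum>j\<le>Suc n. z^j * G e1 e2 n j b t) =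
      (\<Sum>j\<le>Suc n. z^j * (C2 t * W e1 e2 n j True t + Q 0 * W e1 e2 n j False t))
      + (\<Sum>j\<le>Suc n. z^j * (if j = 0 then 0 else d2 * W e1 e2 n (j-1) False t))"
      using False by (simp add: G_def Aop_def distrib_left sum.distrib algebra_simps cong: if_cong)
    also have "\<dots> = Aop z b (V e1 e2 n z True t) (V e1 e2 n z False t) t"
      by (simp only: e2 e3) (simp add: False Aop_def Q_split[of z] algebra_simps)
    finally show ?thesis .
  qed
qed

lemma V_deriv: "t \<in> {0..T} \<Longrightarrow>
  ((\<lambda>t. V e1 e2 (Suc n) z b t) has_vector_derivative Aop z b (V e1 e2 n z True t) (V e1 e2 n z False t) t) (at t within {0..T})"
proof -
  assume t: "t \<in> {0..T}"
  have "((\<lambda>t. V e1 e2 (Suc n) z b t) has_vector_derivative (\<Sum>j\<le>Suc n. z^j * G e1 e2 n j b t)) (at t within {0..T})"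
    unfolding V_def by (intro has_vector_derivative_sum has_vector_derivative_mult_right W_deriv t)
  then show ?thesis by (simp only: V_sum_id)
qed

end

context odesys begin

lemma Aop_bound:
  assumes "norm (P z) \<le> M" "norm (Q z) \<le> M" "norm (C1 s) \<le> M" "norm (C2 s) \<le> M"
  shows "norm (Aop z b y1 y2 s) \<le> M * norm y1 + M * norm y2"
proof -
  have "norm (P z * y1 + C1 s * y2) \<le> M * norm y1 + M * norm y2"
    by (rule order.trans[OF norm_triangle_ineq]) (auto simp: norm_mult intro!: add_mono mult_right_mono assms)
  moreover have "norm (Q z * y2 + C2 s * y1) \<le> M * norm y2 + M * norm y1"
    by (rule order.trans[OF norm_triangle_ineq]) (auto simp: norm_mult intro!: add_mono mult_right_mono assms)
  ultimately show ?thesis by (simp add: Aop_def add.commute)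
qed

lemma poly_integral:
  fixes K E t :: real
  assumes "0 \<le> t"
  shows "((\<lambda>s. K * E * (K * s)^n / fact n) has_integral (E * (K * t)^(Suc n) / fact (Suc n))) {0..t}"
proof -
  have d: "((\<lambda>s. E * (K * s)^(Suc n) / fact (Suc n)) has_vector_derivative K * E * (K * x)^n / fact n)
        (at x within {0..t})" for x
  proof -
    have eq: "(\<lambda>s. E * (K * s)^(Suc n) / fact (Suc n)) = (\<lambda>s. (E * K^Suc n / fact (Suc n)) * s^Suc n)"
      by (simp add: fun_eq_iff power_mult_distrib)
    have "((\<lambda>s. (E * K^Suc n / fact (Suc n)) * s^Suc n) has_real_derivative
        (E * K^Suc n / fact (Suc n)) * (of_nat (Suc n) * x^n)) (at x within {0..t})"
      using DERIV_pow[of "Suc n" x "{0..t}"] by (intro DERIV_cmult) simp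
    moreover have "(E * K^Suc n / fact (Suc n)) * (of_nat (Suc n) * x^n) = K * E * (K * x)^n / fact n"
    proof -
      have "(E * K^Suc n / fact (Suc n)) * (of_nat (Suc n) * x^n) = (E * K^Suc n * x^n) * (of_nat (Suc n) / fact (Suc n))"
        by (simp add: algebra_simps)
      also have "of_nat (Suc n) / fact (Suc n) = (1 / fact n :: real)"
        by (simp add: fact_Suc del: of_nat_Suc)
      finally show ?thesis by (simp add: power_mult_distrib algebra_simps)
    qed
    ultimately show "((\<lambda>s. E * (K * s)^(Suc n) / fact (Suc n)) has_vector_derivative K * E * (K * x)^n / fact n)
        (at x within {0..t})"
      unfolding eq has_real_derivative_iff_has_vector_derivative[symmetric] by metis
  qed
  from fundamental_theorem_of_calculus[OF assms d] show ?thesis by simp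
qed

lemma V_bound:
  assumes M: "\<And>s. s \<in> {0..T} \<Longrightarrow> norm (C1 s) \<le> M \<and> norm (C2 s) \<le> M"
    and PM: "norm (P z) \<le> M" and QM: "norm (Q z) \<le> M"
    and E: "norm e1 \<le> E" "norm e2 \<le> E"
  shows "t \<in> {0..T} \<Longrightarrow> norm (V e1 e2 n z b t) \<le> E * (2 * M * t)^n / fact n"
proof (induction n arbitrary: t b)
  case 0
  then show ?case using E by (simp add: V_0)
next
  case (Suc n)
  have t: "0 \<le> t" "t \<le> T" using Suc.prems by auto
  let ?D = "\<lambda>s. Aop z b (V e1 e2 n z True s) (V e1 e2 n z False s) s"
  have fi: "(?D has_integral (V e1 e2 (Suc n) z b t - V e1 e2 (Suc n) z b 0)) {0..t}"
    by (rule fundamental_theorem_of_calculus[OF t(1)]) (rule V_deriv)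
  have gi: "((\<lambda>s. (2*M) * E * ((2*M) * s)^n / fact n) has_integral (E * ((2*M) * t)^(Suc n) / fact (Suc n))) {0..t}"
    by (rule poly_integral[OF t(1)])
  have le: "norm (?D s) \<le> (2*M) * E * ((2*M) * s)^n / fact n" if s: "s \<in> {0..t}" for s
  proof -
    have sT: "s \<in> {0..T}" using s t by auto
    have "norm (?D s) \<le> M * norm (V e1 e2 n z True s) + M * norm (V e1 e2 n z False s)"
      using M[OF sT] PM QM by (intro Aop_bound) auto
    also have "\<dots> \<le> M * (E * (2 * M * s)^n / fact n) + M * (E * (2 * M * s)^n / fact n)"
      using Suc.IH[OF sT] M[OF sT] by (intro add_mono mult_left_mono) (auto intro: order.trans[OF norm_ge_zero])
    also have "\<dots> = (2*M) * E * ((2*M) * s)^n / fact n" by simp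
    finally show ?thesis .
  qed
  have "norm (integral {0..t} ?D) \<le> integral {0..t} (\<lambda>s. (2*M) * E * ((2*M) * s)^n / fact n)"
    using fi gi le by (intro integral_norm_bound_integral) (auto simp: has_integral_integrable)
  moreover have "integral {0..t} ?D = V e1 e2 (Suc n) z b t"
    using integral_unique[OF fi] by (simp add: V_Suc_at0)
  moreover have "integral {0..t} (\<lambda>s. (2*M) * E * ((2*M) * s)^n / fact n) = E * ((2*M) * t)^(Suc n) / fact (Suc n)"
    using integral_unique[OF gi] .
  ultimately show ?case by simp
qed

end

context odesys begin

lemma M_exists: "\<exists>M\<ge>0. (\<forall>s\<in>{0..T}. norm (C1 s) \<le> M \<and> norm (C2 s) \<le> M) \<and>
   (\<forall>z. norm z \<le> R \<longrightarrow> norm (P z) \<le> M \<and> norm (Q z) \<le> M)"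
proof -
  have "compact (c ` {0..T})"
    by (rule compact_continuous_image[OF continuous_on_subset[OF c_cont]]) auto
  then obtain B where B: "\<And>s. s \<in> {0..T} \<Longrightarrow> norm (c s) \<le> B"
    using compact_imp_bounded bounded_iff by (metis imageI)
  define M where "M = norm (P 0) + norm (Q 0) + \<bar>R\<bar> * (norm d1 + norm d2) + \<bar>B\<bar> / norm lm"
  have M0: "M \<ge> 0" unfolding M_def by (auto intro!: add_nonneg_nonneg)
  have c1: "norm (C1 s) \<le> M \<and> norm (C2 s) \<le> M" if "s \<in> {0..T}" for s
  proof -
    have "norm (c s) / norm lm \<le> \<bar>B\<bar> / norm lm"
      using B[OF that] lm_nz by (intro divide_right_mono) auto
    also have "\<dots> \<le> M" unfolding M_def by (auto intro!: add_nonneg_nonneg)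
    finally show ?thesis by (simp add: C1_def C2_def norm_divide)
  qed
  have c2: "norm (P z) \<le> M \<and> norm (Q z) \<le> M" if "norm z \<le> R" for z
  proof -
    have zd1: "norm (z * d1) \<le> \<bar>R\<bar> * norm d1" and zd2: "norm (z * d2) \<le> \<bar>R\<bar> * norm d2"
      using that by (auto simp: norm_mult intro!: mult_right_mono)
    have "norm (P z) \<le> norm (P 0) + \<bar>R\<bar> * norm d1"
      using norm_triangle_ineq[of "P 0" "z * d1"] zd1 by (simp add: P_split[of z])
    moreover have "norm (Q z) \<le> norm (Q 0) + \<bar>R\<bar> * norm d2"
      using norm_triangle_ineq[of "Q 0" "z * d2"] zd2 by (simp add: Q_split[of z])
    moreover have "\<bar>R\<bar> * norm d1 \<le> \<bar>R\<bar> * (norm d1 + norm d2)" "\<bar>R\<bar> * norm d2 \<le> \<bar>R\<bar> * (norm d1 + norm d2)"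
      by (auto intro!: mult_left_mono)
    moreover have "0 \<le> \<bar>B\<bar> / norm lm" by auto
    moreover have "0 \<le> norm (P 0)" "0 \<le> norm (Q 0)" by auto
    ultimately show ?thesis unfolding M_def by linarith
  qed
  show ?thesis using M0 c1 c2 by blast
qed

lemma exp_summable: "summable (\<lambda>n. E * (K * t)^n / fact n :: real)"
proof -
  have "summable (\<lambda>n. E * (inverse (fact n) * (K * t)^n) :: real)"
    by (intro summable_mult summable_exp)
  then show ?thesis by (simp add: field_simps)
qed

definition Y :: "complex \<Rightarrow> complex \<Rightarrow> complex \<Rightarrow> bool \<Rightarrow> real \<Rightarrow> complex" where
  "Y e1 e2 z b t = (\<Sum>n. V e1 e2 n z b t)"

lemma V_bound': "0 \<le> T \<Longrightarrow> \<exists>K. \<forall>n. \<forall>t\<in>{0..T}. \<forall>b. norm (V e1 e2 n z b t) \<le> (norm e1 + norm e2) * K^n / fact n"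
proof -
  assume T: "0 \<le> T"
  obtain M where M: "M \<ge> 0" "\<forall>s\<in>{0..T}. norm (C1 s) \<le> M \<and> norm (C2 s) \<le> M"
      "\<forall>z'. norm z' \<le> norm z \<longrightarrow> norm (P z') \<le> M \<and> norm (Q z') \<le> M"
    using M_exists[of T "norm z"] by blast
  have "norm (V e1 e2 n z b t) \<le> (norm e1 + norm e2) * (2*M*T)^n / fact n" if t: "t \<in> {0..T}" for n t b
  proof -
    have "norm (V e1 e2 n z b t) \<le> (norm e1 + norm e2) * (2 * M * t)^n / fact n"
      using M t by (intro V_bound[of T M z e1 "norm e1 + norm e2" e2]) auto
    also have "\<dots> \<le> (norm e1 + norm e2) * (2*M*T)^n / fact n"
      using t M by (intro divide_right_mono mult_left_mono power_mono mult_left_mono) auto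
    finally show ?thesis .
  qed
  then show ?thesis by blast
qed

lemma Y_summable: "0 \<le> t \<Longrightarrow> summable (\<lambda>n. V e1 e2 n z b t)"
proof -
  assume t: "0 \<le> t"
  obtain K where K: "\<forall>n. \<forall>s\<in>{0..t}. \<forall>b. norm (V e1 e2 n z b s) \<le> (norm e1 + norm e2) * K^n / fact n"
    using V_bound'[OF t] by blast
  show ?thesis
    by (rule summable_comparison_test[of _ "\<lambda>n. (norm e1 + norm e2) * (K * 1)^n / fact n"])
       (use K t exp_summable[of "norm e1 + norm e2" K 1] in auto)
qed

lemma Y_0: "Y e1 e2 z b 0 = (if b then e1 else e2)"
proof -
  have s: "summable (\<lambda>n. V e1 e2 n z b 0)" by (rule Y_summable) simp
  have "(\<Sum>n. V e1 e2 (Suc n) z b 0) = 0" by (simp add: V_Suc_at0)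
  with suminf_split_head[OF s] show ?thesis by (simp add: Y_def V_0)
qed

end

context odesys begin

lemma Aop_suminf:
  assumes "summable f1" "summable f2"
  shows "(\<Sum>n. Aop z b (f1 n) (f2 n) x) = Aop z b (suminf f1) (suminf f2) x"
proof (cases b)
  case True
  have "(\<Sum>n. P z * f1 n + C1 x * f2 n) = (\<Sum>n. P z * f1 n) + (\<Sum>n. C1 x * f2 n)"
    using assms by (intro suminf_add[symmetric] summable_mult)
  then show ?thesis using True assms by (simp add: Aop_def suminf_mult)
next
  case False
  have "(\<Sum>n. Q z * f2 n + C2 x * f1 n) = (\<Sum>n. Q z * f2 n) + (\<Sum>n. C2 x * f1 n)"
    using assms by (intro suminf_add[symmetric] summable_mult)
  then show ?thesis using False assms by (simp add: Aop_def suminf_mult)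
qed

lemma Y_deriv:
  assumes T: "0 \<le> T" and t: "t \<in> {0..T}"
  shows "((\<lambda>t. Y e1 e2 z b t) has_vector_derivative Aop z b (Y e1 e2 z True t) (Y e1 e2 z False t) t) (at t within {0..T})"
proof -
  define E where "E = norm e1 + norm e2"
  obtain K where K: "\<And>n s b. s \<in> {0..T} \<Longrightarrow> norm (V e1 e2 n z b s) \<le> E * K^n / fact n"
    using V_bound'[OF T, of e1 e2 z] unfolding E_def by blast
  obtain M where M: "M \<ge> 0" "\<forall>s\<in>{0..T}. norm (C1 s) \<le> M \<and> norm (C2 s) \<le> M"
      "\<forall>z'. norm z' \<le> norm z \<longrightarrow> norm (P z') \<le> M \<and> norm (Q z') \<le> M"
    using M_exists[of T "norm z"] by blast
  define D where "D n x = (case n of 0 \<Rightarrow> 0 | Suc m \<Rightarrow> Aop z b (V e1 e2 m z True x) (V e1 e2 m z False x) x)" for n x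
  have der: "((\<lambda>t. V e1 e2 n z b t) has_vector_derivative D n x) (at x within {0..T})" if x: "x \<in> {0..T}" for n x
  proof (cases n)
    case 0 then show ?thesis by (simp add: D_def V_0)
  next
    case (Suc m) then show ?thesis using V_deriv[OF x] by (simp add: D_def)
  qed
  define Mb where "Mb n = (case n of 0 \<Rightarrow> 0 | Suc m \<Rightarrow> 2 * M * E * (K * 1)^m / fact m)" for n
  have Dbound: "norm (D n x) \<le> Mb n" if x: "x \<in> {0..T}" for n x
  proof (cases n)
    case 0 then show ?thesis by (simp add: D_def Mb_def)
  next
    case (Suc m)
    have "norm (D n x) \<le> M * norm (V e1 e2 m z True x) + M * norm (V e1 e2 m z False x)"
      unfolding Suc D_def using M x by (auto intro!: Aop_bound)
    also have "\<dots> \<le> M * (E * K^m / fact m) + M * (E * K^m / fact m)"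
      using K[OF x] M by (intro add_mono mult_left_mono) auto
    also have "\<dots> = Mb n" by (simp add: Mb_def Suc)
    finally show ?thesis .
  qed
  have sMb: "summable Mb"
    by (subst summable_Suc_iff[symmetric]) (use exp_summable[of "2 * M * E" K 1] in \<open>simp add: Mb_def\<close>)
  have ulim: "uniform_limit {0..T} (\<lambda>N x. \<Sum>i<N. D i x) (\<lambda>x. \<Sum>i. D i x) sequentially"
    by (rule Weierstrass_m_test[OF Dbound sMb])
  have sumD: "(\<Sum>i. D i x) = Aop z b (Y e1 e2 z True x) (Y e1 e2 z False x) x" if x: "x \<in> {0..T}" for x
  proof -
    have sD: "summable (\<lambda>i. D i x)"
      by (rule summable_comparison_test[OF _ sMb]) (use Dbound[OF x] in auto)
    have "(\<Sum>i. D i x) = (\<Sum>m. D (Suc m) x)" using suminf_split_head[OF sD] by (simp add: D_def)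
    also have "\<dots> = (\<Sum>m. Aop z b (V e1 e2 m z True x) (V e1 e2 m z False x) x)" by (simp add: D_def)
    also have "\<dots> = Aop z b (Y e1 e2 z True x) (Y e1 e2 z False x) x"
      unfolding Y_def using x by (intro Aop_suminf Y_summable) auto
    finally show ?thesis .
  qed
  have "\<exists>g. \<forall>x\<in>{0..T}. (\<lambda>n. V e1 e2 n z b x) sums (g x) \<and>
     (g has_derivative (\<lambda>h. h *\<^sub>R Aop z b (Y e1 e2 z True x) (Y e1 e2 z False x) x)) (at x within {0..T})"
  proof (rule has_derivative_series[where f' = "\<lambda>n x h. h *\<^sub>R D n x"])
    show "convex {0..T::real}" by simp
    show "((\<lambda>t. V e1 e2 n z b t) has_derivative (\<lambda>h. h *\<^sub>R D n x)) (at x within {0..T})" if "x \<in> {0..T}" for n x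
      using der[OF that] by (simp add: has_vector_derivative_def)
    show "t \<in> {0..T}" by (rule t)
    show "(\<lambda>n. V e1 e2 n z b t) sums Y e1 e2 z b t"
      unfolding Y_def using t by (intro summable_sums Y_summable) auto
    fix e :: real assume e: "e > 0"
    have "\<forall>\<^sub>F n in sequentially. \<forall>x\<in>{0..T}. dist (\<Sum>i<n. D i x) (\<Sum>i. D i x) < e"
      using uniform_limitD[OF ulim e] .
    then show "\<forall>\<^sub>F n in sequentially. \<forall>x\<in>{0..T}. \<forall>h. norm ((\<Sum>i<n. h *\<^sub>R D i x) -
        h *\<^sub>R Aop z b (Y e1 e2 z True x) (Y e1 e2 z False x) x) \<le> e * norm h"
    proof (rule eventually_mono)
      fix n assume H: "\<forall>x\<in>{0..T}. dist (\<Sum>i<n. D i x) (\<Sum>i. D i x) < e"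
      show "\<forall>x\<in>{0..T}. \<forall>h. norm ((\<Sum>i<n. h *\<^sub>R D i x) -
        h *\<^sub>R Aop z b (Y e1 e2 z True x) (Y e1 e2 z False x) x) \<le> e * norm h"
      proof (intro ballI allI)
        fix x h assume x: "x \<in> {0..T}"
        have "norm ((\<Sum>i<n. h *\<^sub>R D i x) - h *\<^sub>R Aop z b (Y e1 e2 z True x) (Y e1 e2 z False x) x)
            = \<bar>h\<bar> * dist (\<Sum>i<n. D i x) (\<Sum>i. D i x)"
          by (simp add: sumD[OF x] scaleR_sum_right[symmetric] dist_norm scaleR_diff_right[symmetric])
        also have "\<dots> \<le> \<bar>h\<bar> * e" using H x by (intro mult_left_mono) (auto intro: less_imp_le)
        finally show "norm ((\<Sum>i<n. h *\<^sub>R D i x) - h *\<^sub>R Aop z b (Y e1 e2 z True x) (Y e1 e2 z False x) x) \<le> e * norm h"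
          by (simp add: mult.commute)
      qed
    qed
  qed
  then obtain g where g: "\<And>x. x \<in> {0..T} \<Longrightarrow> (\<lambda>n. V e1 e2 n z b x) sums (g x)"
    "\<And>x. x \<in> {0..T} \<Longrightarrow> (g has_vector_derivative Aop z b (Y e1 e2 z True x) (Y e1 e2 z False x) x) (at x within {0..T})"
    unfolding has_vector_derivative_def by blast
  show ?thesis
  proof (rule has_vector_derivative_transform[OF t _ g(2)[OF t]])
    fix x assume "x \<in> {0..T}"
    then show "Y e1 e2 z b x = g x" using g(1) unfolding Y_def by (simp add: sums_iff)
  qed
qed

end

context odesys begin

lemma V_holo: "(\<lambda>z. \<Sum>n<N. V e1 e2 n z b T) holomorphic_on S"
  unfolding V_def by (intro holomorphic_intros)

lemma Y_holo_ball:
  assumes T: "0 \<le> T" and R: "0 < R"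
  shows "(\<lambda>z. Y e1 e2 z b T) holomorphic_on ball 0 R"
proof -
  obtain M where M: "M \<ge> 0" "\<forall>s\<in>{0..T}. norm (C1 s) \<le> M \<and> norm (C2 s) \<le> M"
      "\<forall>z'. norm z' \<le> R \<longrightarrow> norm (P z') \<le> M \<and> norm (Q z') \<le> M"
    using M_exists[of T R] by blast
  define E where "E = norm e1 + norm e2"
  have bnd: "norm (V e1 e2 n z b T) \<le> E * (2 * M * T)^n / fact n" if z: "z \<in> cball 0 R" for n z
    using M z T unfolding E_def by (intro V_bound[of T M z e1 _ e2]) auto
  have ulim: "uniform_limit (cball 0 R) (\<lambda>N z. \<Sum>n<N. V e1 e2 n z b T) (\<lambda>z. Y e1 e2 z b T) sequentially"
    unfolding Y_def by (rule Weierstrass_m_test[OF bnd exp_summable])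
  show ?thesis
  proof (rule holomorphic_uniform_limit[OF _ ulim])
    show "\<forall>\<^sub>F n in sequentially. continuous_on (cball 0 R) (\<lambda>z. \<Sum>n<n. V e1 e2 n z b T) \<and>
        (\<lambda>z. \<Sum>n<n. V e1 e2 n z b T) holomorphic_on ball 0 R"
      by (intro always_eventually allI conjI holomorphic_on_imp_continuous_on V_holo)
  qed auto
qed

lemma Y_holo:
  assumes T: "0 \<le> T"
  shows "(\<lambda>z. Y e1 e2 z b T) holomorphic_on UNIV"
proof -
  have "\<exists>f'. ((\<lambda>z. Y e1 e2 z b T) has_field_derivative f') (at x)" for x
  proof -
    have h: "(\<lambda>z. Y e1 e2 z b T) holomorphic_on ball 0 (norm x + 1)"
      by (rule Y_holo_ball[OF T]) (auto intro: add_nonneg_pos)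
    have "x \<in> ball 0 (norm x + 1)" by auto
    then show ?thesis using h holomorphic_on_open[of "ball 0 (norm x + 1)"] by auto
  qed
  then show ?thesis using holomorphic_on_open[of UNIV] by auto
qed

end


lemma exp_vd: "((\<lambda>s. exp (k * complex_of_real s)) has_vector_derivative (k * exp (k * complex_of_real s))) (at s within S)"
proof -
  have h: "((\<lambda>s. k * complex_of_real s) has_vector_derivative k * 1) (at s within S)"
    by (intro has_vector_derivative_mult_right has_vector_derivative_of_real) (auto intro!: derivative_eq_intros)
  have "((exp \<circ> (\<lambda>s. k * complex_of_real s)) has_vector_derivative (k * 1 * exp (k * complex_of_real s))) (at s within S)"
    by (rule field_vector_diff_chain_within[OF h]) (rule has_field_derivative_at_within[OF DERIV_exp])
  then show ?thesis by (simp add: o_def)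
qed

lemma exp_unique:
  fixes f :: "real \<Rightarrow> complex"
  assumes d: "\<And>t. t \<in> {0..T} \<Longrightarrow> (f has_vector_derivative (k * f t)) (at t within {0..T})"
    and t: "t \<in> {0..T}"
  shows "f t = f 0 * exp (k * of_real t)"
proof -
  define g where "g s = f s * exp (- k * of_real s)" for s
  have "(g has_derivative (\<lambda>h. 0)) (at s within {0..T})" if s: "s \<in> {0..T}" for s
  proof -
    have "(g has_vector_derivative (f s * (- k * exp (- k * of_real s)) + k * f s * exp (- k * of_real s))) (at s within {0..T})"
      unfolding g_def by (intro has_vector_derivative_mult d s exp_vd)
    then show ?thesis by (simp add: has_vector_derivative_def algebra_simps)
  qed
  then obtain C where C: "\<And>x. x \<in> {0..T} \<Longrightarrow> g x = C"
    using has_derivative_zero_constant[of "{0..T}" g] by auto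
  have "g t = g 0" using C t by (metis atLeastAtMost_iff order.trans order_refl C)
  then have "f t * exp (- k * of_real t) = f 0" by (simp add: g_def)
  then have "f t * exp (- k * of_real t) * exp (k * of_real t) = f 0 * exp (k * of_real t)" by simp
  then show ?thesis by (simp add: exp_minus_inverse mult.assoc flip: exp_add)
qed

context odesys begin

definition issol :: "complex \<Rightarrow> (real \<Rightarrow> complex) \<Rightarrow> (real \<Rightarrow> complex) \<Rightarrow> real \<Rightarrow> bool" where
  "issol z Z1 Z2 T \<longleftrightarrow> (\<forall>t\<in>{0..T}. (Z1 has_vector_derivative Aop z True (Z1 t) (Z2 t) t) (at t within {0..T}) \<and>
      (Z2 has_vector_derivative Aop z False (Z1 t) (Z2 t) t) (at t within {0..T}))"

lemma Y_issol: "0 \<le> T \<Longrightarrow> issol z (Y e1 e2 z True) (Y e1 e2 z False) T"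
  unfolding issol_def using Y_deriv by blast

lemma wronsk:
  assumes X: "issol z X1 X2 T" and U: "issol z U1 U2 T" and t: "t \<in> {0..T}"
  shows "((\<lambda>t. X1 t * U2 t - X2 t * U1 t) has_vector_derivative (P z + Q z) * (X1 t * U2 t - X2 t * U1 t)) (at t within {0..T})"
proof -
  have "((\<lambda>t. X1 t * U2 t - X2 t * U1 t) has_vector_derivative
     (X1 t * Aop z False (U1 t) (U2 t) t + Aop z True (X1 t) (X2 t) t * U2 t)
    - (X2 t * Aop z True (U1 t) (U2 t) t + Aop z False (X1 t) (X2 t) t * U1 t)) (at t within {0..T})"
    using X U t unfolding issol_def by (intro has_vector_derivative_diff has_vector_derivative_mult) auto
  then show ?thesis by (simp add: Aop_def algebra_simps)
qed

lemma rep: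
  assumes T: "0 \<le> T" and Z: "issol z Z1 Z2 T" and t: "t \<in> {0..T}"
  shows "Z1 t = Z1 0 * Y 1 0 z True t + Z2 0 * Y 0 1 z True t \<and>
         Z2 t = Z1 0 * Y 1 0 z False t + Z2 0 * Y 0 1 z False t"
proof -
  let ?k = "P z + Q z"
  let ?a = "Y 1 0 z True" and ?b = "Y 1 0 z False" and ?c = "Y 0 1 z True" and ?d = "Y 0 1 z False"
  have S1: "issol z ?a ?b T" and S2: "issol z ?c ?d T" using Y_issol[OF T] by auto
  have W: "?a t * ?d t - ?b t * ?c t = exp (?k * of_real t)"
    using exp_unique[of T "\<lambda>t. ?a t * ?d t - ?b t * ?c t" ?k t] wronsk[OF S1 S2] t by (simp add: Y_0)
  have Na: "Z1 t * ?d t - Z2 t * ?c t = Z1 0 * exp (?k * of_real t)"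
    using exp_unique[of T "\<lambda>t. Z1 t * ?d t - Z2 t * ?c t" ?k t] wronsk[OF Z S2] t by (simp add: Y_0)
  have Nb: "?a t * Z2 t - ?b t * Z1 t = Z2 0 * exp (?k * of_real t)"
    using exp_unique[of T "\<lambda>t. ?a t * Z2 t - ?b t * Z1 t" ?k t] wronsk[OF S1 Z] t by (simp add: Y_0)
  have i1: "Z1 t * (?a t * ?d t - ?b t * ?c t) = (Z1 t * ?d t - Z2 t * ?c t) * ?a t + (?a t * Z2 t - ?b t * Z1 t) * ?c t"
    by (simp add: algebra_simps)
  have i2: "Z2 t * (?a t * ?d t - ?b t * ?c t) = (Z1 t * ?d t - Z2 t * ?c t) * ?b t + (?a t * Z2 t - ?b t * Z1 t) * ?d t"
    by (simp add: algebra_simps)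
  have e: "exp (?k * of_real t) \<noteq> 0" by simp
  have "Z1 t * exp (?k * of_real t) = (Z1 0 * ?a t + Z2 0 * ?c t) * exp (?k * of_real t)"
    using i1 unfolding W Na Nb by (simp add: algebra_simps)
  moreover have "Z2 t * exp (?k * of_real t) = (Z1 0 * ?b t + Z2 0 * ?d t) * exp (?k * of_real t)"
    using i2 unfolding W Na Nb by (simp add: algebra_simps)
  ultimately show ?thesis using e by simp
qed

end


lemma energy_alg:
  fixes x y l C :: complex and nu :: real
  shows "Re (x * cnj ((cnj l - \<i> * of_real nu) * x + C * y) + ((cnj l - \<i> * of_real nu) * x + C * y) * cnj x
     - (y * cnj ((- l + \<i> * of_real nu) * y + cnj C * x) + ((- l + \<i> * of_real nu) * y + cnj C * x) * cnj y))
   = 2 * Re l * ((cmod x)^2 + (cmod y)^2)"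
  unfolding cmod_power2 by (simp add: algebra_simps power2_eq_square)

lemma det_lemma:
  fixes a b c d x y :: complex
  assumes "x = x*a + y*c" "y = x*b + y*d" "x \<noteq> 0 \<or> y \<noteq> 0"
  shows "(a-1)*(d-1) - c*b = 0"
proof -
  have e1: "(a - 1) * x + c * y = 0" using assms(1) by (simp add: algebra_simps)
  have e2: "b * x + (d - 1) * y = 0" using assms(2) by (simp add: algebra_simps)
  have "((a-1)*(d-1) - c*b) * x = (d - 1) * ((a - 1) * x + c * y) - c * (b * x + (d - 1) * y)"
    by (simp add: algebra_simps)
  then have f1: "((a-1)*(d-1) - c*b) * x = 0" using e1 e2 by simp
  have "((a-1)*(d-1) - c*b) * y = (a - 1) * (b * x + (d - 1) * y) - b * ((a - 1) * x + c * y)"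
    by (simp add: algebra_simps)
  then have f2: "((a-1)*(d-1) - c*b) * y = 0" using e1 e2 by simp
  show ?thesis using f1 f2 assms(3) by auto
qed

context odesys begin

definition F :: "real \<Rightarrow> complex \<Rightarrow> complex" where
  "F T z = (Y 1 0 z True T - 1) * (Y 0 1 z False T - 1) - Y 0 1 z True T * Y 1 0 z False T"

lemma F_holo: "0 \<le> T \<Longrightarrow> F T holomorphic_on UNIV"
  unfolding F_def[abs_def] by (intro holomorphic_intros Y_holo)

lemma F_zero:
  assumes T: "0 \<le> T" and Z: "issol z Z1 Z2 T" and per: "Z1 T = Z1 0" "Z2 T = Z2 0"
    and nz: "Z1 0 \<noteq> 0 \<or> Z2 0 \<noteq> 0"
  shows "F T z = 0"
proof -
  have r: "Z1 T = Z1 0 * Y 1 0 z True T + Z2 0 * Y 0 1 z True T \<and>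
         Z2 T = Z1 0 * Y 1 0 z False T + Z2 0 * Y 0 1 z False T"
    by (rule rep[OF T Z]) (use T in simp)
  have q1: "Z1 0 = Z1 0 * Y 1 0 z True T + Z2 0 * Y 0 1 z True T" using conjunct1[OF r] unfolding per(1) .
  have q2: "Z2 0 = Z1 0 * Y 1 0 z False T + Z2 0 * Y 0 1 z False T" using conjunct2[OF r] unfolding per(2) .
  show ?thesis unfolding F_def by (rule det_lemma[OF q1 q2 nz])
qed

lemma lincomb_issol:
  assumes "0 \<le> T"
  shows "issol z (\<lambda>t. v1 * Y 1 0 z True t + v2 * Y 0 1 z True t) (\<lambda>t. v1 * Y 1 0 z False t + v2 * Y 0 1 z False t) T"
proof -
  have S1: "issol z (Y 1 0 z True) (Y 1 0 z False) T" and S2: "issol z (Y 0 1 z True) (Y 0 1 z False) T"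
    using Y_issol[OF assms] by auto
  show ?thesis unfolding issol_def
  proof (intro ballI conjI)
    fix t assume t: "t \<in> {0..T}"
    have "((\<lambda>t. v1 * Y 1 0 z True t + v2 * Y 0 1 z True t) has_vector_derivative
       v1 * Aop z True (Y 1 0 z True t) (Y 1 0 z False t) t + v2 * Aop z True (Y 0 1 z True t) (Y 0 1 z False t) t) (at t within {0..T})"
      using S1 S2 t unfolding issol_def by (intro has_vector_derivative_add has_vector_derivative_mult_right) auto
    then show "((\<lambda>t. v1 * Y 1 0 z True t + v2 * Y 0 1 z True t) has_vector_derivative
      Aop z True (v1 * Y 1 0 z True t + v2 * Y 0 1 z True t) (v1 * Y 1 0 z False t + v2 * Y 0 1 z False t) t) (at t within {0..T})"
      by (simp add: Aop_def algebra_simps)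
    have "((\<lambda>t. v1 * Y 1 0 z False t + v2 * Y 0 1 z False t) has_vector_derivative
       v1 * Aop z False (Y 1 0 z True t) (Y 1 0 z False t) t + v2 * Aop z False (Y 0 1 z True t) (Y 0 1 z False t) t) (at t within {0..T})"
      using S1 S2 t unfolding issol_def by (intro has_vector_derivative_add has_vector_derivative_mult_right) auto
    then show "((\<lambda>t. v1 * Y 1 0 z False t + v2 * Y 0 1 z False t) has_vector_derivative
      Aop z False (v1 * Y 1 0 z True t + v2 * Y 0 1 z True t) (v1 * Y 1 0 z False t + v2 * Y 0 1 z False t) t) (at t within {0..T})"
      by (simp add: Aop_def algebra_simps)
  qed
qed

definition z0 :: complex where "z0 = - \<i> * lm * cnj lm"

lemma P_z0: "P z0 = cnj lm - \<i> * of_real nu"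
  using lm_nz by (simp add: P_def z0_def)
lemma Q_z0: "Q z0 = - lm + \<i> * of_real nu"
proof -
  have "cnj lm \<noteq> 0" using lm_nz by simp
  then show ?thesis by (simp add: Q_def z0_def)
qed
lemma C2_C1: "C2 t = cnj (C1 t)" by (simp add: C1_def C2_def)

lemma energy:
  assumes Re: "Re lm > 0" and T: "0 < T" and Z: "issol z0 Z1 Z2 T" and per: "Z1 T = Z1 0" "Z2 T = Z2 0"
  shows "Z1 0 = 0 \<and> Z2 0 = 0"
proof -
  define D where "D t = Z1 t * cnj (Aop z0 True (Z1 t) (Z2 t) t) + Aop z0 True (Z1 t) (Z2 t) t * cnj (Z1 t)
     - (Z2 t * cnj (Aop z0 False (Z1 t) (Z2 t) t) + Aop z0 False (Z1 t) (Z2 t) t * cnj (Z2 t))" for t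
  define En where "En t = Z1 t * cnj (Z1 t) - Z2 t * cnj (Z2 t)" for t
  have dE: "(En has_vector_derivative D t) (at t within {0..T})" if t: "t \<in> {0..T}" for t
    using Z t unfolding issol_def En_def D_def
    by (intro has_vector_derivative_diff has_vector_derivative_mult has_vector_derivative_cnj) auto
  have ReD: "Re (D t) = 2 * Re lm * ((cmod (Z1 t))^2 + (cmod (Z2 t))^2)" for t
    unfolding D_def Aop_def using energy_alg[of "Z1 t" lm nu "C1 t" "Z2 t"]
    by (simp add: P_z0 Q_z0 C2_C1)
  have dRe: "((\<lambda>t. Re (En t)) has_vector_derivative Re (D t)) (at t within {0..T})" if t: "t \<in> {0..T}" for t
    using dE[OF t] unfolding has_vector_derivative_complex_iff
    by (simp add: has_real_derivative_iff_has_vector_derivative)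
  have "((\<lambda>t. Re (D t)) has_integral (Re (En T) - Re (En 0))) {0..T}"
    using T by (intro fundamental_theorem_of_calculus dRe) auto
  then have int0: "((\<lambda>t. 2 * Re lm * ((cmod (Z1 t))^2 + (cmod (Z2 t))^2)) has_integral 0) (cbox 0 T)"
    using per by (simp add: ReD En_def)
  have c1: "continuous_on {0..T} Z1" and c2: "continuous_on {0..T} Z2"
    using Z unfolding issol_def by (auto intro!: continuous_on_vector_derivative)
  have cont: "continuous_on (cbox 0 T) (\<lambda>t. 2 * Re lm * ((cmod (Z1 t))^2 + (cmod (Z2 t))^2))"
    using c1 c2 by (auto intro!: continuous_intros)
  have "2 * Re lm * ((cmod (Z1 0))^2 + (cmod (Z2 0))^2) = 0"
    by (rule has_integral_0_cbox_imp_0[OF cont _ int0]) (use Re T in auto)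
  then have "(cmod (Z1 0))^2 + (cmod (Z2 0))^2 = 0" using Re by simp
  then show ?thesis by (simp add: add_nonneg_eq_0_iff)
qed

lemma F_z0:
  assumes Re: "Re lm > 0" and T: "0 < T"
  shows "F T z0 \<noteq> 0"
proof
  assume F0: "F T z0 = 0"
  let ?a = "Y 1 0 z0 True T - 1" and ?b = "Y 1 0 z0 False T" and ?c = "Y 0 1 z0 True T" and ?d = "Y 0 1 z0 False T - 1"
  have det: "?a * ?d - ?c * ?b = 0" using F0 by (simp add: F_def)
  obtain v1 v2 where v: "v1 \<noteq> 0 \<or> v2 \<noteq> 0" "?a * v1 + ?c * v2 = 0" "?b * v1 + ?d * v2 = 0"
  proof (cases "?a = 0 \<and> ?c = 0")
    case True
    show ?thesis
    proof (cases "?b = 0 \<and> ?d = 0")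
      case True2: True
      show ?thesis by (rule that[of 1 0]) (use True True2 in auto)
    next
      case False
      show ?thesis by (rule that[of ?d "- ?b"]) (use True False det in \<open>auto simp: algebra_simps\<close>)
    qed
  next
    case False
    show ?thesis by (rule that[of ?c "- ?a"]) (use False det in \<open>auto simp: algebra_simps\<close>)
  qed
  define Z1 where "Z1 t = v1 * Y 1 0 z0 True t + v2 * Y 0 1 z0 True t" for t
  define Z2 where "Z2 t = v1 * Y 1 0 z0 False t + v2 * Y 0 1 z0 False t" for t
  have S: "issol z0 Z1 Z2 T" unfolding Z1_def[abs_def] Z2_def[abs_def] using T by (intro lincomb_issol) auto
  have Z10: "Z1 0 = v1" and Z20: "Z2 0 = v2" by (simp_all add: Z1_def Z2_def Y_0)
  have "Z1 T = Z1 0" using v(2) unfolding Z10 by (simp add: Z1_def algebra_simps)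
  moreover have "Z2 T = Z2 0" using v(3) unfolding Z20 by (simp add: Z2_def algebra_simps)
  ultimately have "Z1 0 = 0 \<and> Z2 0 = 0" by (rule energy[OF Re T S])
  then show False using v(1) Z10 Z20 by simp
qed

end


definition Rr :: "complex \<Rightarrow> real \<Rightarrow> complex" where "Rr s \<rho> = exp (s * of_real (ln \<rho>))"

lemma bf_eq: "\<rho> > 0 \<Longrightarrow> basic_form s \<phi> \<psi> \<rho> t = Rr s \<rho> * \<phi> t + cnj (Rr s \<rho> * \<psi> t)"
  by (simp add: basic_form_def Rr_def powr_def Ln_of_real)

lemma Rr_1: "Rr s 1 = 1" by (simp add: Rr_def)

lemma Rr_deriv:
  assumes r: "r > 0"
  shows "(Rr s has_vector_derivative (s / of_real r * Rr s r)) (at r)"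
proof -
  have h: "((\<lambda>\<rho>. s * of_real (ln \<rho>)) has_vector_derivative s * of_real (1 / r)) (at r)"
    by (intro has_vector_derivative_mult_right has_vector_derivative_of_real DERIV_ln_divide r)
  have "((exp \<circ> (\<lambda>\<rho>. s * of_real (ln \<rho>))) has_vector_derivative (s * of_real (1 / r) * exp (s * of_real (ln r)))) (at r)"
    by (rule field_vector_diff_chain_at[OF h]) (rule DERIV_exp)
  then show ?thesis by (simp add: Rr_def[abs_def] o_def divide_inverse mult.assoc of_real_inverse)
qed

lemma bf_dr:
  assumes r: "r > 0"
  shows "((\<lambda>\<rho>. basic_form s \<phi> \<psi> \<rho> t) has_vector_derivative
     (s / of_real r * Rr s r * \<phi> t + cnj (s / of_real r * Rr s r * \<psi> t))) (at r)"
proof (rule has_vector_derivative_transform_within_open[of _ _ _ "{0<..}"])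
  show "((\<lambda>\<rho>. Rr s \<rho> * \<phi> t + cnj (Rr s \<rho> * \<psi> t)) has_vector_derivative
     (s / of_real r * Rr s r * \<phi> t + cnj (s / of_real r * Rr s r * \<psi> t))) (at r)"
    by (intro has_vector_derivative_add has_vector_derivative_cnj has_vector_derivative_mult_left Rr_deriv r)
qed (use r bf_eq in auto)

lemma eqR:
  fixes R lm s x y dx dy cc :: complex and r nu :: real
  assumes r: "r > 0"
  shows "lm * (R * dx + cnj (R * dy)) - \<i> * of_real r * (s / of_real r * R * x + cnj (s / of_real r * R * y))
     + \<i> * lm * of_real nu * (R * x + cnj (R * y)) - cc * cnj (R * x + cnj (R * y))
   = R * (lm * dx - \<i> * s * x + \<i> * lm * of_real nu * x - cc * y)
     + cnj R * (lm * cnj dy - \<i> * cnj s * cnj y + \<i> * lm * of_real nu * cnj y - cc * cnj x)"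
  using r by (simp add: field_simps)


context odesys begin

lemma EQ_gen:
  assumes sol: "solves a b nu c \<epsilon> (basic_form \<sigma> \<phi> \<psi>)" and lmdef: "lm = lam a b \<epsilon>"
  obtains WT where
    "\<And>r t. r > 0 \<Longrightarrow> ((\<lambda>s. basic_form \<sigma> \<phi> \<psi> r s) has_vector_derivative WT r t) (at t)"
    "\<And>r t dx dy. r > 0 \<Longrightarrow> WT r t = Rr \<sigma> r * dx + cnj (Rr \<sigma> r * dy) \<Longrightarrow>
       Rr \<sigma> r * (lm * dx - \<i> * \<sigma> * \<phi> t + \<i> * lm * of_real nu * \<phi> t - c t * \<psi> t)
     + cnj (Rr \<sigma> r) * (lm * cnj dy - \<i> * cnj \<sigma> * cnj (\<psi> t) + \<i> * lm * of_real nu * cnj (\<psi> t) - c t * cnj (\<phi> t)) = 0"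
proof -
  have "\<forall>r t. \<exists>wt wr. r > 0 \<longrightarrow> ((\<lambda>s. basic_form \<sigma> \<phi> \<psi> r s) has_vector_derivative wt) (at t) \<and>
        ((\<lambda>\<rho>. basic_form \<sigma> \<phi> \<psi> \<rho> t) has_vector_derivative wr) (at r) \<and>
        lm * wt - \<i> * complex_of_real r * wr + \<i> * lm * complex_of_real nu * basic_form \<sigma> \<phi> \<psi> r t
          - c t * cnj (basic_form \<sigma> \<phi> \<psi> r t) = 0"
    using sol unfolding solves_def lmdef by blast
  then obtain WT WR where W: "\<And>r t. r > 0 \<Longrightarrow> ((\<lambda>s. basic_form \<sigma> \<phi> \<psi> r s) has_vector_derivative WT r t) (at t) \<and>
        ((\<lambda>\<rho>. basic_form \<sigma> \<phi> \<psi> \<rho> t) has_vector_derivative WR r t) (at r) \<and>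
        lm * WT r t - \<i> * complex_of_real r * WR r t + \<i> * lm * complex_of_real nu * basic_form \<sigma> \<phi> \<psi> r t
          - c t * cnj (basic_form \<sigma> \<phi> \<psi> r t) = 0"
    by metis
  show ?thesis
  proof (rule that[of WT])
    fix r t :: real assume "r > 0" then show "((\<lambda>s. basic_form \<sigma> \<phi> \<psi> r s) has_vector_derivative WT r t) (at t)"
      using W by blast
  next
    fix r t :: real and dx dy assume r: "r > 0" and wt: "WT r t = Rr \<sigma> r * dx + cnj (Rr \<sigma> r * dy)"
    have wr: "WR r t = \<sigma> / of_real r * Rr \<sigma> r * \<phi> t + cnj (\<sigma> / of_real r * Rr \<sigma> r * \<psi> t)"
      using W[OF r] bf_dr[OF r] vector_derivative_unique_at by blast
    have "lm * WT r t - \<i> * complex_of_real r * WR r t + \<i> * lm * complex_of_real nu * basic_form \<sigma> \<phi> \<psi> r t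
          - c t * cnj (basic_form \<sigma> \<phi> \<psi> r t) = 0" using W[OF r] by blast
    then show "Rr \<sigma> r * (lm * dx - \<i> * \<sigma> * \<phi> t + \<i> * lm * of_real nu * \<phi> t - c t * \<psi> t)
     + cnj (Rr \<sigma> r) * (lm * cnj dy - \<i> * cnj \<sigma> * cnj (\<psi> t) + \<i> * lm * of_real nu * cnj (\<psi> t) - c t * cnj (\<phi> t)) = 0"
      unfolding wt wr bf_eq[OF r] eqR[OF r] .
  qed
qed

end

context odesys begin

definition gsol :: "complex \<Rightarrow> (real \<Rightarrow> complex) \<Rightarrow> (real \<Rightarrow> complex) \<Rightarrow> bool" where
  "gsol z Z1 Z2 \<longleftrightarrow> (\<forall>t. (Z1 has_vector_derivative Aop z True (Z1 t) (Z2 t) t) (at t) \<and>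
      (Z2 has_vector_derivative Aop z False (Z1 t) (Z2 t) t) (at t)) \<and> periodic2pi Z1 \<and> periodic2pi Z2 \<and>
      (\<exists>t. Z1 t \<noteq> 0 \<or> Z2 t \<noteq> 0)"

lemma spec_sol_real:
  assumes lmdef: "lm = lam a b \<epsilon>"
    and per1: "periodic2pi \<phi>" and per2: "periodic2pi \<psi>"
    and sol: "solves a b nu c \<epsilon> (basic_form \<sigma> \<phi> \<psi>)"
    and nz: "\<exists>r>0. \<exists>t. basic_form \<sigma> \<phi> \<psi> r t \<noteq> 0"
    and real: "\<sigma> \<in> \<real>"
  shows "\<exists>Z1 Z2. gsol \<sigma> Z1 Z2"
proof -
  obtain s where s: "\<sigma> = of_real s" using real by (auto elim: Reals_cases)
  obtain WT where WT1: "\<And>r t. r > 0 \<Longrightarrow> ((\<lambda>s. basic_form \<sigma> \<phi> \<psi> r s) has_vector_derivative WT r t) (at t)"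
    and EQ: "\<And>r t dx dy. r > 0 \<Longrightarrow> WT r t = Rr \<sigma> r * dx + cnj (Rr \<sigma> r * dy) \<Longrightarrow>
       Rr \<sigma> r * (lm * dx - \<i> * \<sigma> * \<phi> t + \<i> * lm * of_real nu * \<phi> t - c t * \<psi> t)
     + cnj (Rr \<sigma> r) * (lm * cnj dy - \<i> * cnj \<sigma> * cnj (\<psi> t) + \<i> * lm * of_real nu * cnj (\<psi> t) - c t * cnj (\<phi> t)) = 0"
    using EQ_gen[OF sol lmdef] by blast
  define f where "f t = \<phi> t + cnj (\<psi> t)" for t
  have bf1: "(\<lambda>s. basic_form \<sigma> \<phi> \<psi> 1 s) = f" by (simp add: fun_eq_iff bf_eq Rr_1 f_def)
  have deq: "WT 1 t = Aop \<sigma> True (f t) (cnj (f t)) t" for t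
  proof -
    have "1 * (lm * WT 1 t - \<i> * \<sigma> * \<phi> t + \<i> * lm * of_real nu * \<phi> t - c t * \<psi> t)
     + cnj 1 * (lm * cnj 0 - \<i> * cnj \<sigma> * cnj (\<psi> t) + \<i> * lm * of_real nu * cnj (\<psi> t) - c t * cnj (\<phi> t)) = 0"
      using EQ[of 1 t "WT 1 t" 0] by (simp add: Rr_1)
    then have e: "lm * WT 1 t = \<i> * \<sigma> * f t - \<i> * lm * of_real nu * f t + c t * cnj (f t)"
      by (simp add: s f_def algebra_simps)
    have "lm * Aop \<sigma> True (f t) (cnj (f t)) t = \<i> * \<sigma> * f t - \<i> * lm * of_real nu * f t + c t * cnj (f t)"
      using lm_nz by (simp add: Aop_def P_def C1_def field_simps)
    with e have "lm * WT 1 t = lm * Aop \<sigma> True (f t) (cnj (f t)) t" by simp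
    then show ?thesis using lm_nz by simp
  qed
  have dcnj: "cnj (Aop \<sigma> True (f t) (cnj (f t)) t) = Aop \<sigma> False (f t) (cnj (f t)) t" for t
    by (simp add: Aop_def P_def Q_def C1_def C2_def s)
  have g: "gsol \<sigma> f (\<lambda>t. cnj (f t))"
    unfolding gsol_def
  proof (intro conjI allI)
    fix t
    show "(f has_vector_derivative Aop \<sigma> True (f t) (cnj (f t)) t) (at t)"
      using WT1[of 1 t] unfolding bf1 deq by simp
    then show "((\<lambda>t. cnj (f t)) has_vector_derivative Aop \<sigma> False (f t) (cnj (f t)) t) (at t)"
      unfolding dcnj[symmetric] by (rule has_vector_derivative_cnj)
  next
    show "periodic2pi f" using per1 per2 by (simp add: periodic2pi_def f_def)
    show "periodic2pi (\<lambda>t. cnj (f t))" using per1 per2 by (simp add: periodic2pi_def f_def)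
  next
    obtain r t where r: "r > 0" and ne: "basic_form \<sigma> \<phi> \<psi> r t \<noteq> 0" using nz by blast
    have "cnj (Rr \<sigma> r) = Rr \<sigma> r" unfolding Rr_def s by (metis complex_cnj_complex_of_real exp_of_real of_real_mult)
    then have "basic_form \<sigma> \<phi> \<psi> r t = Rr \<sigma> r * f t" by (simp add: bf_eq[OF r] f_def algebra_simps)
    then show "\<exists>t. f t \<noteq> 0 \<or> cnj (f t) \<noteq> 0" using ne by auto
  qed
  then show ?thesis by blast
qed

end

context odesys begin

lemma spec_sol_nonreal:
  assumes lmdef: "lm = lam a b \<epsilon>"
    and per1: "periodic2pi \<phi>" and per2: "periodic2pi \<psi>"
    and sol: "solves a b nu c \<epsilon> (basic_form \<sigma> \<phi> \<psi>)"
    and nz: "\<exists>r>0. \<exists>t. basic_form \<sigma> \<phi> \<psi> r t \<noteq> 0"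
    and nreal: "\<sigma> \<notin> \<real>"
  shows "\<exists>Z1 Z2. gsol \<sigma> Z1 Z2"
proof -
  have Im: "Im \<sigma> \<noteq> 0" using nreal complex_is_Real_iff by blast
  obtain WT where WT1: "\<And>r t. r > 0 \<Longrightarrow> ((\<lambda>s. basic_form \<sigma> \<phi> \<psi> r s) has_vector_derivative WT r t) (at t)"
    and EQ: "\<And>r t dx dy. r > 0 \<Longrightarrow> WT r t = Rr \<sigma> r * dx + cnj (Rr \<sigma> r * dy) \<Longrightarrow>
       Rr \<sigma> r * (lm * dx - \<i> * \<sigma> * \<phi> t + \<i> * lm * of_real nu * \<phi> t - c t * \<psi> t)
     + cnj (Rr \<sigma> r) * (lm * cnj dy - \<i> * cnj \<sigma> * cnj (\<psi> t) + \<i> * lm * of_real nu * cnj (\<psi> t) - c t * cnj (\<phi> t)) = 0"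
    using EQ_gen[OF sol lmdef] by blast
  define r2 where "r2 = exp (pi / (2 * Im \<sigma>))"
  have r2: "r2 > 0" by (simp add: r2_def)
  define K where "K = exp (Re \<sigma> * pi / (2 * Im \<sigma>))"
  define kk where "kk = of_real K * \<i>"
  have kk0: "kk \<noteq> 0" by (simp add: kk_def K_def)
  have ckk: "cnj kk = - kk" by (simp add: kk_def)
  have R2: "Rr \<sigma> r2 = kk"
  proof -
    have "\<sigma> * of_real (ln r2) = of_real (Re \<sigma> * pi / (2 * Im \<sigma>)) + \<i> * of_real (pi / 2)"
      using Im by (simp add: r2_def complex_eq_iff)
    moreover have h1: "exp (of_real (Re \<sigma> * pi / (2 * Im \<sigma>))) = (of_real K :: complex)"
      by (simp only: K_def exp_of_real)
    moreover have h2: "exp (\<i> * of_real (pi / 2)) = \<i>"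
      by (simp only: cis_conv_exp[symmetric] cis_pi_half)
    ultimately show ?thesis
      unfolding Rr_def kk_def by (simp only: exp_add)
  qed
  define g1 where "g1 s = basic_form \<sigma> \<phi> \<psi> 1 s" for s
  define g2 where "g2 s = basic_form \<sigma> \<phi> \<psi> r2 s" for s
  have g1e: "g1 s = \<phi> s + cnj (\<psi> s)" for s by (simp add: g1_def bf_eq Rr_1)
  have g2e: "g2 s = kk * \<phi> s - kk * cnj (\<psi> s)" for s
    using ckk by (simp add: g2_def bf_eq[OF r2] R2)
  have phie: "\<phi> = (\<lambda>s. inverse 2 * (g1 s + inverse kk * g2 s))"
    using kk0 by (simp add: fun_eq_iff g1e g2e field_simps)
  have psie: "\<psi> = (\<lambda>s. cnj (inverse 2 * (g1 s - inverse kk * g2 s)))"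
  proof -
    have "cnj (\<psi> s) = inverse 2 * (g1 s - inverse kk * g2 s)" for s
      using kk0 by (simp add: g1e g2e field_simps)
    then show ?thesis by (metis complex_cnj_cnj)
  qed
  define Dp where "Dp t = inverse 2 * (WT 1 t + inverse kk * WT r2 t)" for t
  define Dq where "Dq t = cnj (inverse 2 * (WT 1 t - inverse kk * WT r2 t))" for t
  have dg1: "(g1 has_vector_derivative WT 1 t) (at t)" for t
    using WT1[of 1 t] unfolding g1_def[abs_def] by simp
  have dg2: "(g2 has_vector_derivative WT r2 t) (at t)" for t
    using WT1[OF r2, of t] unfolding g2_def[abs_def] by simp
  have dp: "(\<phi> has_vector_derivative Dp t) (at t)" for t
    unfolding Dp_def by (subst phie) (intro has_vector_derivative_mult_right has_vector_derivative_add dg1 dg2)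
  have dq: "(\<psi> has_vector_derivative Dq t) (at t)" for t
    unfolding Dq_def by (subst psie) (intro has_vector_derivative_cnj has_vector_derivative_mult_right has_vector_derivative_diff dg1 dg2)
  have B: "Dp t = Aop \<sigma> True (\<phi> t) (\<psi> t) t \<and> Dq t = Aop \<sigma> False (\<phi> t) (\<psi> t) t" for t
  proof -
    define B1 where "B1 = lm * Dp t - \<i> * \<sigma> * \<phi> t + \<i> * lm * of_real nu * \<phi> t - c t * \<psi> t"
    define B2 where "B2 = lm * cnj (Dq t) - \<i> * cnj \<sigma> * cnj (\<psi> t) + \<i> * lm * of_real nu * cnj (\<psi> t) - c t * cnj (\<phi> t)"
    have w1: "WT 1 t = Rr \<sigma> 1 * Dp t + cnj (Rr \<sigma> 1 * Dq t)"
      by (simp add: Rr_1 Dp_def Dq_def field_simps)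
    have w2: "WT r2 t = Rr \<sigma> r2 * Dp t + cnj (Rr \<sigma> r2 * Dq t)"
      using kk0 ckk by (simp add: R2 Dp_def Dq_def field_simps)
    have e1: "B1 + B2 = 0" using EQ[OF _ w1] by (simp add: Rr_1 B1_def B2_def)
    have "kk * B1 + cnj kk * B2 = 0" using EQ[OF r2 w2] by (simp add: R2 B1_def B2_def)
    then have "kk * (B1 - B2) = 0" by (simp add: ckk algebra_simps)
    then have e2: "B1 = B2" using kk0 by simp
    have b1: "B1 = 0" and b2: "B2 = 0" using e1 e2 by auto
    have x1: "lm * Dp t = \<i> * \<sigma> * \<phi> t - \<i> * lm * of_real nu * \<phi> t + c t * \<psi> t"
      using b1 unfolding B1_def by (simp add: algebra_simps)
    have y1: "lm * Aop \<sigma> True (\<phi> t) (\<psi> t) t = \<i> * \<sigma> * \<phi> t - \<i> * lm * of_real nu * \<phi> t + c t * \<psi> t"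
      using lm_nz by (simp add: Aop_def P_def C1_def field_simps)
    have x2: "cnj lm * Dq t = - \<i> * \<sigma> * \<psi> t + \<i> * cnj lm * of_real nu * \<psi> t + cnj (c t) * \<phi> t"
    proof -
      have "cnj B2 = 0" using b2 by simp
      then show ?thesis unfolding B2_def by (simp add: algebra_simps)
    qed
    have y2: "cnj lm * Aop \<sigma> False (\<phi> t) (\<psi> t) t = - \<i> * \<sigma> * \<psi> t + \<i> * cnj lm * of_real nu * \<psi> t + cnj (c t) * \<phi> t"
      using lm_nz by (simp add: Aop_def Q_def C2_def field_simps)
    have "lm * Dp t = lm * Aop \<sigma> True (\<phi> t) (\<psi> t) t" using x1 y1 by simp
    moreover have "cnj lm * Dq t = cnj lm * Aop \<sigma> False (\<phi> t) (\<psi> t) t" using x2 y2 by simp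
    ultimately show ?thesis using lm_nz by simp
  qed
  have "gsol \<sigma> \<phi> \<psi>"
    unfolding gsol_def
  proof (intro conjI allI)
    fix t
    show "(\<phi> has_vector_derivative Aop \<sigma> True (\<phi> t) (\<psi> t) t) (at t)" using dp[of t] B[of t] by simp
    show "(\<psi> has_vector_derivative Aop \<sigma> False (\<phi> t) (\<psi> t) t) (at t)" using dq[of t] B[of t] by simp
  next
    show "periodic2pi \<phi>" "periodic2pi \<psi>" using per1 per2 by auto
  next
    obtain r t where r: "r > 0" and ne: "basic_form \<sigma> \<phi> \<psi> r t \<noteq> 0" using nz by blast
    then have "\<phi> t \<noteq> 0 \<or> \<psi> t \<noteq> 0" by (auto simp: bf_eq[OF r])
    then show "\<exists>t. \<phi> t \<noteq> 0 \<or> \<psi> t \<noteq> 0" by blast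
  qed
  then show ?thesis by blast
qed

end


lemma per_nat: "periodic2pi f \<Longrightarrow> f (t + 2 * pi * of_nat n) = f t"
proof (induction n)
  case 0 then show ?case by simp
next
  case (Suc n)
  have "f (t + 2 * pi * of_nat (Suc n)) = f ((t + 2 * pi * of_nat n) + 2 * pi)"
    by (simp add: algebra_simps)
  also have "\<dots> = f (t + 2 * pi * of_nat n)" using Suc.prems unfolding periodic2pi_def by blast
  finally show ?case using Suc by simp
qed

lemma per_int: "periodic2pi f \<Longrightarrow> f (t + 2 * pi * of_int m) = f t"
proof (cases "m \<ge> 0")
  case True
  assume p: "periodic2pi f"
  obtain n where "m = int n" using True nonneg_int_cases by blast
  then show ?thesis using per_nat[OF p, of t n] by simp
next
  case False
  assume p: "periodic2pi f"
  define n where "n = nat (- m)"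
  have n: "m = - int n" using False by (simp add: n_def)
  have "f ((t - 2 * pi * of_nat n) + 2 * pi * of_nat n) = f (t - 2 * pi * of_nat n)" by (rule per_nat[OF p])
  moreover have "(t - 2 * pi * of_nat n) + 2 * pi * of_nat n = t" by simp
  moreover have "t + 2 * pi * of_int m = t - 2 * pi * of_nat n" using n by simp
  ultimately show ?thesis by metis
qed

lemma Ck_cont:
  fixes c :: "real \<Rightarrow> complex"
  assumes "k \<ge> 2" "Ck k c"
  shows "continuous_on UNIV c"
proof -
  have k: "0 < k" using assms(1) by simp
  have "\<forall>x. vderiv_iter 0 c differentiable at x" using assms(2) k unfolding Ck_def by blast
  then have "\<forall>x. c differentiable at x" by (simp add: vderiv_iter_def)
  then show "continuous_on UNIV c"
    by (intro continuous_at_imp_continuous_on) (auto intro: differentiable_imp_continuous_within)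
qed

context odesys begin

lemma gsol_F:
  assumes g: "gsol \<sigma> Z1 Z2"
  shows "F (2 * pi) \<sigma> = 0"
proof -
  let ?T = "2 * pi"
  have T: "0 \<le> ?T" by simp
  have S: "issol \<sigma> Z1 Z2 ?T"
    using g unfolding gsol_def issol_def by (simp add: has_vector_derivative_at_within)
  have p1: "periodic2pi Z1" and p2: "periodic2pi Z2" using g unfolding gsol_def by auto
  have e1: "Z1 ?T = Z1 0" using p1 unfolding periodic2pi_def by (metis add_0_left)
  have e2: "Z2 ?T = Z2 0" using p2 unfolding periodic2pi_def by (metis add_0_left)
  obtain t0 where t0: "Z1 t0 \<noteq> 0 \<or> Z2 t0 \<noteq> 0" using g unfolding gsol_def by blast
  have nz: "Z1 0 \<noteq> 0 \<or> Z2 0 \<noteq> 0"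
  proof (rule ccontr)
    assume "\<not> (Z1 0 \<noteq> 0 \<or> Z2 0 \<noteq> 0)"
    then have z: "Z1 0 = 0" "Z2 0 = 0" by auto
    define m where "m = \<lfloor>t0 / (2 * pi)\<rfloor>"
    define t' where "t' = t0 - 2 * pi * of_int m"
    have "of_int m \<le> t0 / (2 * pi)" "t0 / (2 * pi) < of_int m + 1"
      unfolding m_def using floor_correct[of "t0 / (2 * pi)"] by auto
    then have "2 * pi * of_int m \<le> t0" "t0 < 2 * pi * (of_int m + 1)"
      by (simp_all add: field_simps)
    then have t'in: "t' \<in> {0..?T}" unfolding t'_def by (auto simp: algebra_simps)
    have "Z1 t' = 0 \<and> Z2 t' = 0" using rep[OF T S t'in] z by simp
    moreover have "Z1 t0 = Z1 t'" "Z2 t0 = Z2 t'"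
      using per_int[OF p1, of t' m] per_int[OF p2, of t' m] unfolding t'_def by simp_all
    ultimately show False using t0 by simp
  qed
  show ?thesis by (rule F_zero[OF T S e1 e2 nz])
qed

end

theorem lemma2p1:
  fixes a b \<nu> :: real and k :: nat and c :: "real \<Rightarrow> complex"
  assumes "a > 0" and "b \<noteq> 0" and "0 \<le> \<nu>" and "\<nu> < 1" and "k \<ge> 2"
    and "periodic2pi c" and "Ck k c"
  shows "\<forall>\<epsilon>::real. \<forall>z. \<not> z islimpt Spec a b \<nu> c \<epsilon>"
proof (intro allI notI)
  fix \<epsilon> :: real and z :: complex
  assume lim: "z islimpt Spec a b \<nu> c \<epsilon>"
  have cc: "continuous_on UNIV c" by (rule Ck_cont[OF assms(5,7)])
  define lm where "lm = lam a b \<epsilon>"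
  have Re: "Re lm = a" by (simp add: lm_def lam_def)
  then have lm0: "lm \<noteq> 0" using assms(1) by auto
  interpret odesys lm \<nu> c using lm0 cc by unfold_locales
  have sub: "Spec a b \<nu> c \<epsilon> \<subseteq> {\<sigma>. F (2 * pi) \<sigma> = 0}"
  proof
    fix \<sigma> assume "\<sigma> \<in> Spec a b \<nu> c \<epsilon>"
    then obtain \<phi> \<psi> where h: "periodic2pi \<phi>" "periodic2pi \<psi>" "solves a b \<nu> c \<epsilon> (basic_form \<sigma> \<phi> \<psi>)"
      "\<exists>r>0. \<exists>t. basic_form \<sigma> \<phi> \<psi> r t \<noteq> 0" unfolding Spec_def by blast
    have "\<exists>Z1 Z2. gsol \<sigma> Z1 Z2"
    proof (cases "\<sigma> \<in> \<real>")
      case True then show ?thesis using spec_sol_real[OF lm_def h] by blast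
    next
      case False then show ?thesis using spec_sol_nonreal[OF lm_def h] by blast
    qed
    then show "\<sigma> \<in> {\<sigma>. F (2 * pi) \<sigma> = 0}" using gsol_F by blast
  qed
  have hol: "F (2 * pi) holomorphic_on UNIV" by (rule F_holo) simp
  have lim2: "z islimpt {\<sigma>. F (2 * pi) \<sigma> = 0}" by (rule islimpt_subset[OF lim sub])
  have "F (2 * pi) z0 = 0"
  proof (rule analytic_continuation[OF hol])
    show "open (UNIV :: complex set)" by simp
    show "connected (UNIV :: complex set)" by (rule connected_UNIV)
    show "{\<sigma>. F (2 * pi) \<sigma> = 0} \<subseteq> UNIV" by simp
    show "z \<in> UNIV" by simp
    show "z islimpt {\<sigma>. F (2 * pi) \<sigma> = 0}" by (rule lim2)
    show "z0 \<in> UNIV" by simp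
  qed simp
  moreover have "F (2 * pi) z0 \<noteq> 0" using F_z0[of "2 * pi"] Re assms(1) by simp
  ultimately show False by simp
qed


end
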